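(* The group $\Phi_L$, viewed as a subgroup of ${\rm PGL}_3(\mathbb{Q}_2)$, is torsion-free.
   Context: Let $\mathcal{O}$ be the ring of integers of $\mathbb{Q}(\sqrt{-7})$, $\Gamma_L$ the unitary group of the standard Hermitian lattice $\mathcal{O}[\tfrac12]^3$ (standard Hermitian form $\sum x_i\bar y_i$), and $P\Gamma_L$ its quotient by scalars; a fixed embedding $\mathcal{O}\to\mathbb{Z}_2$ identifies $P\Gamma_L$ with a lattice in ${\rm PGL}_3(\mathbb{Q}_2)$. With $\theta=\sqrt{-7}$, the Hermitian form induces a nondegenerate symmetric bilinear form on $\mathcal{O}[\tfrac12]^3/\theta\mathcal{O}[\tfrac12]^3\cong\mathbb{F}_7^3$, yielding a homomorphism $\Gamma_L\to{\rm O}_3(7)$ and hence $P\Gamma_L\to{\rm PO}_3(7)\cong{\rm PGL}_2(7)$. $\Phi_L$ is the kernel of this homomorphism $P\Gamma_L\to{\rm PGL}_2(7)$. *)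

theory Defs
  imports "HOL-Analysis.Analysis"
begin

text \<open>The ring O[1/2] for O the ring of integers of Q(sqrt(-7)), realised inside the
complex numbers.  Since 2 O is contained in Z[sqrt(-7)], which is contained in O,
we have O[1/2] = Z[1/2][sqrt(-7)].\<close>
definition O2 :: "complex set" where
  "O2 = {Complex (of_int a / 2 ^ k) (of_int b / 2 ^ k * sqrt 7) | a b (k::nat). True}"

definition theta :: complex where
  "theta = \<i> * complex_of_real (sqrt 7)"

definition cong_theta :: "complex \<Rightarrow> complex \<Rightarrow> bool" where
  "cong_theta z w \<longleftrightarrow> (\<exists>u\<in>O2. z - w = theta * u)"

definition cadj :: "complex^3^3 \<Rightarrow> complex^3^3" where
  "cadj g = (\<chi> i j. cnj (g $ j $ i))"

definition mpow :: "complex^3^3 \<Rightarrow> nat \<Rightarrow> complex^3^3" where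
  "mpow g n = (((**) g) ^^ n) (mat 1)"

definition is_scalar :: "complex^3^3 \<Rightarrow> bool" where
  "is_scalar g \<longleftrightarrow> (\<exists>c. g = mat c)"

text \<open>Unitary group of the standard Hermitian lattice O[1/2]^3 (form sum x_i conj y_i).\<close>
definition Gamma_L :: "(complex^3^3) set" where
  "Gamma_L = {g. (\<forall>i j. g $ i $ j \<in> O2) \<and> cadj g ** g = mat 1}"

text \<open>Preimage in Gamma_L of Phi_L: elements whose reduction mod theta lies in the
centre {I, -I} of O_3(7), i.e. maps to the identity of PO_3(7).\<close>
definition Phi_L :: "(complex^3^3) set" where
  "Phi_L = {g \<in> Gamma_L. \<exists>e\<in>{1, -1}. \<forall>i j. cong_theta (g $ i $ j) (mat e $ i $ j)}"

end

theory Submission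
  imports Defs
begin


lemma theta_sq: "theta^2 = -7"
proof -
  have "complex_of_real (sqrt 7) * complex_of_real (sqrt 7) = 7"
    by (simp flip: of_real_mult)
  then show ?thesis unfolding theta_def power2_eq_square 
    by (simp add: algebra_simps)
qed

lemma O2_iff: "z \<in> O2 \<longleftrightarrow> (\<exists>a b (k::nat). z = (of_int a + of_int b * theta) / 2^k)"
proof -
  have e: "Complex (of_int a / 2 ^ k) (of_int b / 2 ^ k * sqrt 7) = (of_int a + of_int b * theta) / 2^k" for a b :: int and k :: nat
    by (simp add: complex_eq_iff theta_def)
  show ?thesis unfolding O2_def mem_Collect_eq e by simp
qed

lemma O2_add: "x \<in> O2 \<Longrightarrow> y \<in> O2 \<Longrightarrow> x + y \<in> O2"
proof -
  assume "x \<in> O2" "y \<in> O2"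
  then obtain a b k c d l where x: "x = (of_int a + of_int b * theta) / 2^k"
    and y: "y = (of_int c + of_int d * theta) / 2^l" by (auto simp: O2_iff)
  have "x + y = (of_int (a * 2^l + c * 2^k) + of_int (b*2^l + d*2^k) * theta) / 2^(k+l)"
    unfolding x y power_add by (simp add: add_divide_distrib diff_divide_distrib algebra_simps)
  then show ?thesis unfolding O2_iff by blast
qed

lemma O2_mult: "x \<in> O2 \<Longrightarrow> y \<in> O2 \<Longrightarrow> x * y \<in> O2"
proof -
  assume "x \<in> O2" "y \<in> O2"
  then obtain a b k c d l where x: "x = (of_int a + of_int b * theta) / 2^k"
    and y: "y = (of_int c + of_int d * theta) / 2^l" by (auto simp: O2_iff)
  have t: "theta * theta = -7" using theta_sq by (simp add: power2_eq_square)
  have "(of_int a + of_int b * theta) * (of_int c + of_int d * theta) = 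
     of_int (a * c) + of_int (a*d + b*c) * theta + of_int (b*d) * (theta * theta)"
    by (simp add: algebra_simps)
  also have "\<dots> = of_int (a * c - 7 * b * d) + of_int (a*d + b*c) * theta"
    unfolding t by simp
  finally have "x * y = (of_int (a * c - 7 * b * d) + of_int (a*d + b*c) * theta) / 2^(k+l)"
    unfolding x y power_add by simp
  then show ?thesis unfolding O2_iff by blast
qed

lemma O2_of_int: "of_int a \<in> O2"
  unfolding O2_iff by (rule exI[of _ a], rule exI[of _ 0], rule exI[of _ 0]) simp

lemma O2_0: "0 \<in> O2" using O2_of_int[of 0] by simp
lemma O2_1: "1 \<in> O2" using O2_of_int[of 1] by simp
lemma O2_uminus: "x \<in> O2 \<Longrightarrow> - x \<in> O2"
  using O2_mult[OF O2_of_int[of "-1"]] by simp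
lemma O2_diff: "x \<in> O2 \<Longrightarrow> y \<in> O2 \<Longrightarrow> x - y \<in> O2"
  using O2_add O2_uminus by (metis diff_conv_add_uminus)
lemma O2_theta: "theta \<in> O2"
  unfolding O2_iff by (rule exI[of _ 0], rule exI[of _ 1], rule exI[of _ 0]) simp
lemma O2_power: "x \<in> O2 \<Longrightarrow> x ^ n \<in> O2"
  by (induction n) (auto intro: O2_mult O2_1)
lemma O2_of_nat: "of_nat n \<in> O2"
  using O2_of_int[of "int n"] by simp
lemma O2_sum: "(\<And>x. x \<in> A \<Longrightarrow> f x \<in> O2) \<Longrightarrow> sum f A \<in> O2"
  by (induction A rule: infinite_finite_induct) (auto intro: O2_add O2_0)

definition dv :: "nat \<Rightarrow> complex \<Rightarrow> bool" where
  "dv k z \<longleftrightarrow> (\<exists>u\<in>O2. z = theta ^ k * u)"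

lemma theta_nz: "theta \<noteq> 0" by (simp add: theta_def)

lemma dv_O2: "dv k z \<Longrightarrow> z \<in> O2"
  unfolding dv_def by (auto intro: O2_mult O2_power O2_theta)
lemma dv0: "dv 0 z \<longleftrightarrow> z \<in> O2"
  unfolding dv_def by auto
lemma dv_zero: "dv k 0"
  unfolding dv_def using O2_0 by force
lemma dv_add: "dv k x \<Longrightarrow> dv k y \<Longrightarrow> dv k (x + y)"
  unfolding dv_def by (auto simp: distrib_left[symmetric] intro!: bexI[of _ "_ + _"] O2_add)
lemma dv_uminus: "dv k x \<Longrightarrow> dv k (- x)"
  unfolding dv_def by (auto intro!: bexI[of _ "- _"] O2_uminus)
lemma dv_diff: "dv k x \<Longrightarrow> dv k y \<Longrightarrow> dv k (x - y)"
  using dv_add dv_uminus by (metis diff_conv_add_uminus)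
lemma dv_cmult: "c \<in> O2 \<Longrightarrow> dv k x \<Longrightarrow> dv k (c * x)"
  unfolding dv_def by (auto intro!: bexI[of _ "c * _"] O2_mult)
lemma dv_multc: "c \<in> O2 \<Longrightarrow> dv k x \<Longrightarrow> dv k (x * c)"
  using dv_cmult by (metis mult.commute)
lemma dv_mult: "dv k x \<Longrightarrow> dv l y \<Longrightarrow> dv (k + l) (x * y)"
  unfolding dv_def by (auto simp: power_add intro!: bexI[of _ "_ * _"] O2_mult)
lemma dv_theta: "y \<in> O2 \<Longrightarrow> dv k (theta ^ k * y)"
  unfolding dv_def by auto
lemma dv_mono: "dv k x \<Longrightarrow> l \<le> k \<Longrightarrow> dv l x"
proof -
  assume "dv k x" "l \<le> k"
  then obtain u where u: "u \<in> O2" "x = theta ^ k * u" unfolding dv_def by auto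
  have "x = theta ^ l * (theta ^ (k - l) * u)"
    using u(2) \<open>l \<le> k\<close> by (simp add: power_add[symmetric])
  then show ?thesis unfolding dv_def using u(1) by (auto intro!: O2_mult O2_power O2_theta)
qed
lemma dv_sum: "(\<And>x. x \<in> A \<Longrightarrow> dv k (f x)) \<Longrightarrow> dv k (sum f A)"
  by (induction A rule: infinite_finite_induct) (auto intro: dv_add dv_zero)
lemma dv_cancel: "dv (k + l) (theta ^ k * y) \<Longrightarrow> dv l y"
proof -
  assume "dv (k + l) (theta ^ k * y)"
  then obtain u where u: "u \<in> O2" "theta ^ k * y = theta ^ (k + l) * u" unfolding dv_def by auto
  then have "theta ^ k * y = theta ^ k * (theta ^ l * u)" by (simp add: power_add)
  then have "y = theta ^ l * u" using theta_nz by simp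
  then show ?thesis using u(1) unfolding dv_def by auto
qed

lemma bez7: "\<not> 7 dvd (n::nat) \<Longrightarrow> \<exists>s t :: int. s * int n + t * 7 = 1"
proof -
  assume h: "\<not> 7 dvd n"
  define q where "q = int (n div 7)"
  have n: "int n = 7 * q + int (n mod 7)" unfolding q_def by presburger
  have "n mod 7 = 1 \<or> n mod 7 = 2 \<or> n mod 7 = 3 \<or> n mod 7 = 4 \<or> n mod 7 = 5 \<or> n mod 7 = 6"
    using h by presburger
  then show ?thesis
  proof (elim disjE)
    assume r: "n mod 7 = 1" show ?thesis by (rule exI[of _ 1], rule exI[of _ "-q"]) (simp add: n r)
  next
    assume r: "n mod 7 = 2" show ?thesis by (rule exI[of _ 4], rule exI[of _ "-4*q - 1"]) (simp add: n r algebra_simps)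
  next
    assume r: "n mod 7 = 3" show ?thesis by (rule exI[of _ 5], rule exI[of _ "-5*q - 2"]) (simp add: n r algebra_simps)
  next
    assume r: "n mod 7 = 4" show ?thesis by (rule exI[of _ 2], rule exI[of _ "-2*q - 1"]) (simp add: n r algebra_simps)
  next
    assume r: "n mod 7 = 5" show ?thesis by (rule exI[of _ 3], rule exI[of _ "-3*q - 2"]) (simp add: n r algebra_simps)
  next
    assume r: "n mod 7 = 6" show ?thesis by (rule exI[of _ 6], rule exI[of _ "-6*q - 5"]) (simp add: n r algebra_simps)
  qed
qed
lemma dv_coprime:
  assumes "\<not> 7 dvd n" "y \<in> O2" "dv 1 (of_nat n * y)"
  shows "dv 1 y"
proof -
  obtain s t :: int where st: "s * int n + t * 7 = 1" using bez7[OF assms(1)] by blast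
  have c: "of_int s * of_nat n + of_int t * 7 = (1::complex)"
    using arg_cong[OF st, of "of_int :: int \<Rightarrow> complex"] by simp
  have "y = (of_int s * of_nat n + of_int t * 7) * y" unfolding c by simp
  also have "\<dots> = of_int s * (of_nat n * y) + of_int t * (7 * y)" by (simp add: algebra_simps)
  finally have yy: "y = of_int s * (of_nat n * y) + of_int t * (7 * y)" .
  moreover have "dv 1 (7 * y)"
  proof -
    have t: "theta * theta = -7" using theta_sq by (simp add: power2_eq_square)
    have "7 * y = theta ^ 1 * (- theta * y)" by (simp add: mult.assoc[symmetric] t)
    moreover have "- theta * y \<in> O2" using assms(2) by (simp add: O2_mult O2_uminus O2_theta)
    ultimately show ?thesis using dv_theta[of "- theta * y" 1] by simp
  qed
  then show ?thesis using assms(3) yy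
    by (metis dv_add dv_cmult O2_of_int)
qed

lemma dv_unit:
  assumes "a \<in> O2" "e \<in> {1, -1}" "dv 1 (a - e)" "y \<in> O2" "dv 1 (a ^ m * y)"
  shows "dv 1 y"
proof -
  have eO: "e ^ j \<in> O2" for j using assms(2) O2_power O2_1 O2_uminus by auto
  have ind: "dv 1 (a ^ j - e ^ j)" for j
  proof (induction j)
    case 0 then show ?case by (simp add: dv_zero)
  next
    case (Suc j)
    have "a ^ Suc j - e ^ Suc j = a * (a ^ j - e ^ j) + e ^ j * (a - e)" by (simp add: algebra_simps)
    then show ?case using Suc assms(1,3) eO by (metis dv_add dv_cmult)
  qed
  have ee: "e ^ m * e ^ m = 1" using assms(2) by (auto simp: power_mult_distrib[symmetric])
  have "e ^ m * y = a ^ m * y - (a ^ m - e ^ m) * y" by (simp add: algebra_simps)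
  then have d1: "dv 1 (e ^ m * y)" using assms(4,5) ind by (metis dv_diff dv_multc)
  have "y = e ^ m * (e ^ m * y)" using ee by (simp add: mult.assoc[symmetric])
  then show ?thesis using d1 eO by (metis dv_cmult)
qed

lemma coprime74: "coprime ((7::int) ^ m) (4 ^ l)"
proof -
  have "coprime (7::int) 4"
  proof (rule coprimeI)
    fix c :: int assume "c dvd 7" "c dvd 4"
    have "c dvd 7 - 4" using \<open>c dvd 7\<close> \<open>c dvd 4\<close> by (rule dvd_diff)
    then have "c dvd 3" by simp
    then have "c dvd 4 - 3" using \<open>c dvd 4\<close> by (metis dvd_diff)
    then show "is_unit c" by simp
  qed
  then show ?thesis by simp
qed

lemma O2_norm:
  assumes "z = Complex (of_int a / 2 ^ k) (of_int b / 2 ^ k * sqrt 7)"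
  shows "(cmod z)^2 * 4 ^ k = of_int (a^2 + 7 * b^2)"
proof -
  have f: "(4::real) ^ k = (2 ^ k)^2"
    by (metis power2_eq_square power_mult_distrib num_double numeral_times_numeral mult_2_right)
  have "(cmod z)^2 = (of_int a / 2 ^ k)^2 + (of_int b / 2 ^ k * sqrt 7)^2"
    using assms by (simp add: cmod_power2)
  also have "\<dots> = (of_int a ^2 + 7 * of_int b^2) / (2 ^ k)^2"
    by (simp add: power_divide power_mult_distrib add_divide_distrib)
  finally show ?thesis unfolding f by simp
qed

lemma dv_bound:
  assumes "z \<in> O2" "z \<noteq> 0"
  shows "\<exists>m. \<not> dv m z"
proof -
  obtain a b k where z: "z = Complex (of_int a / 2 ^ k) (of_int b / 2 ^ k * sqrt 7)"
    using assms(1) unfolding O2_def by auto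
  define N where "N = a^2 + 7 * b^2"
  have Nz: "(cmod z)^2 * 4 ^ k = of_int N" using O2_norm[OF z] N_def by simp
  have "N \<noteq> 0"
  proof
    assume "N = 0"
    then have "cmod z = 0" using Nz by simp
    then show False using assms(2) by simp
  qed
  moreover have "N \<ge> 0" unfolding N_def by simp
  ultimately have Npos: "N > 0" by simp
  have key: "7 ^ m dvd N" if "dv m z" for m
  proof -
    obtain u where u: "u \<in> O2" "z = theta ^ m * u" using \<open>dv m z\<close> unfolding dv_def by auto
    obtain c d l where uu: "u = Complex (of_int c / 2 ^ l) (of_int d / 2 ^ l * sqrt 7)"
      using u(1) unfolding O2_def by auto
    define N' where "N' = c^2 + 7 * d^2"
    have Nu: "(cmod u)^2 * 4 ^ l = of_int N'" using O2_norm[OF uu] N'_def by simp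
    have ct: "(cmod theta)^2 = 7" by (simp add: theta_def norm_mult)
    have ct2: "(cmod theta)^(2*m) = 7^m" using ct by (simp add: power_mult)
    have "(cmod z)^2 = 7 ^ m * (cmod u)^2"
      using u(2) ct2 by (simp add: norm_mult norm_power power_mult_distrib power_mult[symmetric] mult.commute[of m])
    then have "(cmod z)^2 * 4 ^ k * 4 ^ l = 7 ^ m * ((cmod u)^2 * 4 ^ l) * 4 ^ k" by simp
    then have "real_of_int N * 4 ^ l = 7 ^ m * real_of_int N' * 4 ^ k" unfolding Nz Nu .
    then have "real_of_int (N * 4 ^ l) = real_of_int (7 ^ m * N' * 4 ^ k)" by simp
    then have "N * 4 ^ l = 7 ^ m * N' * 4 ^ k" by (simp only: of_int_eq_iff)
    then have "7 ^ m dvd N * 4 ^ l" by (metis dvd_mult2 dvd_triv_left mult.assoc)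
    then show ?thesis using coprime74 by (metis coprime_dvd_mult_left_iff)
  qed
  have lt: "N < 7 ^ nat N"
  proof -
    have "nat N < 2 ^ nat N" by (rule less_exp)
    also have "(2::nat) ^ nat N \<le> 7 ^ nat N" by (rule power_mono) auto
    finally have "int (nat N) < int (7 ^ nat N)" by linarith
    then show ?thesis using Npos by simp
  qed
  have "\<not> dv (nat N) z"
  proof
    assume "dv (nat N) z"
    then have "7 ^ nat N dvd N" by (rule key)
    then have "7 ^ nat N \<le> N" using Npos by (rule zdvd_imp_le)
    then show False using lt by simp
  qed
  then show ?thesis by blast
qed
lemma binom_seq:
  fixes a :: complex
  shows "a * (\<Sum>k\<le>n. of_nat (n choose k) * a ^ (n - k) * x k) +
     (\<Sum>k\<le>n. of_nat (n choose k) * a ^ (n - k) * x (Suc k)) =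
     (\<Sum>k\<le>Suc n. of_nat (Suc n choose k) * a ^ (Suc n - k) * x k)"
proof -
  have A: "a * (\<Sum>k\<le>n. of_nat (n choose k) * a ^ (n - k) * x k) =
      (\<Sum>k\<le>Suc n. of_nat (n choose k) * a ^ (Suc n - k) * x k)"
  proof -
    have "a * (\<Sum>k\<le>n. of_nat (n choose k) * a ^ (n - k) * x k) =
      (\<Sum>k\<le>n. of_nat (n choose k) * a ^ (Suc n - k) * x k)"
      unfolding sum_distrib_left by (rule sum.cong) (auto simp: Suc_diff_le)
    then show ?thesis by simp
  qed
  have B: "(\<Sum>k\<le>Suc n. of_nat (n choose k) * a ^ (Suc n - k) * x k) =
     a ^ Suc n * x 0 + (\<Sum>k\<le>n. of_nat (n choose Suc k) * a ^ (n - k) * x (Suc k))"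
    by (subst sum.atMost_Suc_shift) simp
  have C: "(\<Sum>k\<le>Suc n. of_nat (Suc n choose k) * a ^ (Suc n - k) * x k) =
     a ^ Suc n * x 0 + (\<Sum>k\<le>n. of_nat (Suc n choose Suc k) * a ^ (n - k) * x (Suc k))"
    by (subst sum.atMost_Suc_shift) simp
  have D: "(\<Sum>k\<le>n. of_nat (Suc n choose Suc k) * a ^ (n - k) * x (Suc k)) =
     (\<Sum>k\<le>n. of_nat (n choose Suc k) * a ^ (n - k) * x (Suc k)) + 
     (\<Sum>k\<le>n. of_nat (n choose k) * a ^ (n - k) * x (Suc k))"
    unfolding sum.distrib[symmetric] by (rule sum.cong) (auto simp: algebra_simps)
  show ?thesis unfolding A B C D by (simp add: algebra_simps)
qed

lemma mpow_0: "mpow g 0 = mat 1" by (simp add: mpow_def)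
lemma mpow_Suc: "mpow g (Suc n) = g ** mpow g n" by (simp add: mpow_def)
lemma mpow_add: "mpow g (m + n) = mpow g m ** mpow g n"
  by (induction m) (simp_all add: mpow_0 mpow_Suc matrix_mul_assoc)
lemma mpow_mult: "mpow g (m * n) = mpow (mpow g m) n"
  by (induction n) (simp_all add: mpow_0 mpow_Suc mpow_add)

lemma mat_nth: "mat c $ i $ j = (if i = j then c else 0)" by (simp add: mat_def)

lemma mmult_nth: "(A ** B) $ i $ j = (\<Sum>l\<in>UNIV. A $ i $ l * B $ l $ j)"
  by (simp add: matrix_matrix_mult_def)

lemma mat_add_mult_nth: "((mat a + X) ** (B::complex^3^3)) $ i $ j = a * B $ i $ j + (X ** B) $ i $ j"
proof -
  have "((mat a + X) ** B) $ i $ j = (\<Sum>l\<in>UNIV. mat a $ i $ l * B $ l $ j) + (\<Sum>l\<in>UNIV. X $ i $ l * B $ l $ j)"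
    by (simp add: mmult_nth distrib_right sum.distrib)
  moreover have "(\<Sum>l\<in>UNIV. mat a $ i $ l * B $ l $ j) = a * B $ i $ j"
  proof -
    have eq: "(\<lambda>l. mat a $ i $ l * B $ l $ j) = (\<lambda>l. if i = l then a * B $ l $ j else 0)"
      by (auto simp: mat_nth)
    show ?thesis unfolding eq by (simp add: sum.delta)
  qed
  ultimately show ?thesis by (simp add: mmult_nth)
qed

lemma mpow_binom:
  fixes X :: "complex^3^3"
  shows "mpow (mat a + X) n $ i $ j = (\<Sum>k\<le>n. of_nat (n choose k) * a ^ (n - k) * (mpow X k $ i $ j))"
proof (induction n arbitrary: i j)
  case 0 then show ?case by (simp add: mpow_0)
next
  case (Suc n)
  have "(X ** mpow (mat a + X) n) $ i $ j = (\<Sum>k\<le>n. of_nat (n choose k) * a ^ (n - k) * (mpow X (Suc k) $ i $ j))"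
  proof -
    have "(X ** mpow (mat a + X) n) $ i $ j = (\<Sum>l\<in>UNIV. X $ i $ l * (\<Sum>k\<le>n. of_nat (n choose k) * a ^ (n - k) * (mpow X k $ l $ j)))"
      by (simp add: mmult_nth Suc.IH)
    also have "\<dots> = (\<Sum>k\<le>n. of_nat (n choose k) * a ^ (n - k) * (\<Sum>l\<in>UNIV. X $ i $ l * mpow X k $ l $ j))"
      by (simp add: sum_distrib_left sum_distrib_right algebra_simps sum.swap[of _ UNIV])
    finally show ?thesis by (simp add: mpow_Suc mmult_nth)
  qed
  moreover have "a * (\<Sum>k\<le>n. of_nat (n choose k) * a ^ (n - k) * (mpow X k $ i $ j)) +
     (\<Sum>k\<le>n. of_nat (n choose k) * a ^ (n - k) * (mpow X (Suc k) $ i $ j)) =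
     (\<Sum>k\<le>Suc n. of_nat (Suc n choose k) * a ^ (Suc n - k) * (mpow X k $ i $ j))"
    by (rule binom_seq)
  ultimately show ?case unfolding mpow_Suc[of "mat a + X"] mat_add_mult_nth Suc.IH by simp
qed

definition mdv :: "nat \<Rightarrow> complex^3^3 \<Rightarrow> bool" where
  "mdv k Y \<longleftrightarrow> (\<forall>i j. dv k (Y $ i $ j))"

lemma mdv_mmult: "mdv k Y \<Longrightarrow> mdv l Z \<Longrightarrow> mdv (k + l) (Y ** Z)"
  unfolding mdv_def mmult_nth by (auto intro!: dv_sum dv_mult)

lemma mdv_one: "mdv 0 (mat 1)"
  unfolding mdv_def dv0 by (auto simp: mat_nth O2_0 O2_1)

lemma mdv_mpow: "mdv k Y \<Longrightarrow> mdv (n * k) (mpow Y n)"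
proof (induction n)
  case 0 then show ?case by (simp add: mpow_0 mdv_one)
next
  case (Suc n) then show ?case using mdv_mmult[of k Y "n * k"] by (simp add: mpow_Suc)
qed

lemma dv7: "dv l w \<Longrightarrow> dv (l + 2) (7 * w)"
proof -
  assume "dv l w"
  have t: "theta * theta = -7" using theta_sq by (simp add: power2_eq_square)
  have "7 * w = (- (theta ^ 2)) * w" using t by (simp add: power2_eq_square)
  moreover have "dv 2 (- (theta ^ 2))" using dv_theta[of "-1" 2] O2_1 O2_uminus by simp
  ultimately show ?thesis using dv_mult[OF \<open>dv l w\<close>, of 2 "- (theta ^ 2)"] by (simp add: mult.commute)
qed

lemma dv_Suc: "y \<in> O2 \<Longrightarrow> dv 1 y \<Longrightarrow> x = theta ^ M * y \<Longrightarrow> dv (Suc M) x"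
proof -
  assume "dv 1 y" "x = theta ^ M * y"
  then obtain u where "u \<in> O2" "y = theta ^ 1 * u" unfolding dv_def by auto
  then show ?thesis using \<open>x = _\<close> unfolding dv_def by (auto simp: mult.assoc)
qed

lemma sum_split01: "1 \<le> (n::nat) \<Longrightarrow> (\<Sum>k\<le>n. f k) = f 0 + f 1 + (\<Sum>k\<in>{2..n}. f k)"
proof -
  assume "1 \<le> n"
  then have "{..n} = insert 0 (insert 1 {2..n})" by auto
  then show ?thesis by (simp add: add.assoc)
qed

definition Pg :: "complex^3^3 \<Rightarrow> bool" where
  "Pg g \<longleftrightarrow> (\<forall>i j. g $ i $ j \<in> O2) \<and> (\<exists>e\<in>{1, -1}. \<forall>i j. dv 1 (g $ i $ j - mat e $ i $ j))"

lemma core: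
  assumes P: "Pg g" and n: "n > 0" and h7: "\<not> 7 dvd n \<or> n = 7" and sc: "mpow g n = mat c"
  shows "is_scalar g"
proof (rule ccontr)
  assume ns: "\<not> is_scalar g"
  obtain e where e: "e \<in> {1, -1}" "\<And>i j. dv 1 (g $ i $ j - mat e $ i $ j)" using P unfolding Pg_def by blast
  have gO: "\<And>i j. g $ i $ j \<in> O2" using P unfolding Pg_def by blast
  define a where "a = g $ 1 $ 1"
  define X where "X = g - mat a"
  have gX: "g = mat a + X" by (simp add: X_def)
  have aO: "a \<in> O2" unfolding a_def by (rule gO)
  have eO: "e \<in> O2" using e(1) O2_1 O2_uminus by auto
  have ae: "dv 1 (a - e)" using e(2)[of 1 1] by (simp add: a_def mat_nth)
  have Xnth: "X $ i $ j = g $ i $ j - (if i = j then a else 0)" for i j by (simp add: X_def mat_nth)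
  have X0: "mdv 0 X" unfolding mdv_def dv0 Xnth by (auto intro: O2_diff gO aO O2_0)
  have X1: "mdv 1 X"
    unfolding mdv_def
  proof (intro allI)
    fix i j
    have "X $ i $ j = (g $ i $ j - mat e $ i $ j) - (if i = j then a - e else 0)"
      by (simp add: Xnth mat_nth)
    then show "dv 1 (X $ i $ j)" using e(2) ae by (auto intro: dv_diff dv_zero)
  qed
  have X11: "X $ 1 $ 1 = 0" by (simp add: Xnth a_def)
  obtain i0 j0 where nz: "X $ i0 $ j0 \<noteq> 0"
  proof -
    have "X \<noteq> 0" using ns gX unfolding is_scalar_def by auto
    then show ?thesis using that by (auto simp: vec_eq_iff)
  qed
  obtain m0 where m0: "\<not> dv m0 (X $ i0 $ j0)"
    using dv_bound[OF _ nz] X0 unfolding mdv_def dv0 by blast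
  define S where "S = {m. mdv m X}"
  have Sb: "S \<subseteq> {..<m0}"
  proof
    fix m assume "m \<in> S"
    then have "mdv m X" by (simp add: S_def)
    show "m \<in> {..<m0}"
    proof (rule ccontr)
      assume "m \<notin> {..<m0}"
      then have "m0 \<le> m" by simp
      then have "dv m0 (X $ i0 $ j0)" using \<open>mdv m X\<close> dv_mono unfolding mdv_def by blast
      then show False using m0 by simp
    qed
  qed
  have Sf: "finite S" using Sb finite_subset by blast
  have S1: "1 \<in> S" using X1 by (simp add: S_def)
  define M where "M = Max S"
  have MS: "M \<in> S" unfolding M_def using Sf S1 Max_in by blast
  have M: "mdv M X" using MS by (simp add: S_def)
  have M1: "1 \<le> M" unfolding M_def using Sf S1 Max_ge by blast
  have notM: "\<not> mdv (Suc M) X"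
  proof
    assume "mdv (Suc M) X"
    then have "Suc M \<in> S" by (simp add: S_def)
    then have "Suc M \<le> M" unfolding M_def using Sf Max_ge by blast
    then show False by simp
  qed
  define B where "B = (\<lambda>i j. SOME u. u \<in> O2 \<and> X $ i $ j = theta ^ M * u)"
  have B: "B i j \<in> O2 \<and> X $ i $ j = theta ^ M * B i j" for i j
  proof -
    have "\<exists>u. u \<in> O2 \<and> X $ i $ j = theta ^ M * u" using M unfolding mdv_def dv_def by blast
    then show ?thesis unfolding B_def by (rule someI_ex)
  qed
  define R where "R = (\<lambda>i j. \<Sum>k\<in>{2..n}. of_nat (n choose k) * a ^ (n - k) * (mpow X k $ i $ j))"
  have expand: "mpow g n $ i $ j = a ^ n * (if i = j then 1 else 0) + of_nat n * a ^ (n - 1) * X $ i $ j + R i j" for i j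
  proof -
    have "mpow g n $ i $ j = (\<Sum>k\<le>n. of_nat (n choose k) * a ^ (n - k) * (mpow X k $ i $ j))"
      unfolding gX by (rule mpow_binom)
    also have "\<dots> = a ^ n * (if i = j then 1 else 0) + of_nat n * a ^ (n - 1) * X $ i $ j + R i j"
      using n unfolding R_def by (subst sum_split01) (auto simp: mpow_0 mpow_Suc mat_nth)
    finally show ?thesis .
  qed
  define K where "K = (if n = 7 then M + 3 else Suc M)"
  have dvR: "dv K (R i j)" for i j
    unfolding R_def
  proof (rule dv_sum)
    fix k assume k: "k \<in> {2..n}"
    have Xk: "dv (k * M) (mpow X k $ i $ j)" using mdv_mpow[OF M, of k] unfolding mdv_def by blast
    have cO: "a ^ (n - k) \<in> O2" using aO by (rule O2_power)
    show "dv K (of_nat (n choose k) * a ^ (n - k) * (mpow X k $ i $ j))"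
    proof (cases "n = 7")
      case False
      have "Suc M \<le> k * M" using k M1 by (simp add: add_mult_distrib) (metis mult_le_mono1 mult_2 Suc_le_eq less_le_trans le_add2 add_less_mono1 mult.commute one_add_one linorder_not_less not_less_eq_eq)
      then have "dv (Suc M) (mpow X k $ i $ j)" using Xk dv_mono by blast
      then show ?thesis using False cO unfolding K_def by (simp add: mult.assoc dv_cmult O2_of_nat)
    next
      case True
      show ?thesis
      proof (cases "k = 7")
        case True
        have "M + 3 \<le> k * M" using M1 True by simp
        then have "dv (M + 3) (mpow X k $ i $ j)" using Xk dv_mono by blast
        then show ?thesis using \<open>n = 7\<close> cO unfolding K_def by (simp add: mult.assoc dv_cmult O2_of_nat)
      next
        case False
        then have "k \<in> {2,3,4,5,6}" using k \<open>n = 7\<close> by auto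
        moreover have c: "(7::nat) choose 2 = 21" "(7::nat) choose 3 = 35" "(7::nat) choose 4 = 35"
          "(7::nat) choose 5 = 21" "(7::nat) choose 6 = 7" by (simp_all add: numeral_eq_Suc)
        ultimately have "7 dvd (7 choose k)" by auto
        then obtain q where q: "(7 choose k) = 7 * q" by blast
        have "M + 1 \<le> k * M" using M1 k by (simp add: add_mult_distrib) (metis mult_le_mono1 mult_2 Suc_le_eq less_le_trans le_add2 add_less_mono1 mult.commute one_add_one linorder_not_less not_less_eq_eq)
        then have "dv (M + 1) (mpow X k $ i $ j)" using Xk dv_mono by blast
        then have d3': "dv (M + 1 + 2) (7 * (mpow X k $ i $ j))" by (rule dv7)
        have "M + 1 + 2 = M + 3" by simp
        then have d3: "dv (M + 3) (7 * (mpow X k $ i $ j))" using d3' by metis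
        have "dv (M + 3) (of_nat q * (a ^ (n - k) * (7 * (mpow X k $ i $ j))))"
          by (intro dv_cmult O2_of_nat cO d3)
        then have "dv (M + 3) (of_nat q * a ^ (n - k) * (7 * (mpow X k $ i $ j)))"
          by (simp add: mult.assoc)
        then show ?thesis using \<open>n = 7\<close> q unfolding K_def by (simp add: algebra_simps)
      qed
    qed
  qed
  have key: "dv (Suc M) (X $ i $ j)" for i j
  proof -
    have Z: "dv K (of_nat n * a ^ (n - 1) * X $ i $ j)"
    proof (cases "i = j")
      case False
      have "mpow g n $ i $ j = 0" using sc False by (simp add: mat_nth)
      then have "of_nat n * a ^ (n - 1) * X $ i $ j = - R i j" using expand[of i j] False
        by (simp add: eq_neg_iff_add_eq_0 add.commute)
      then show ?thesis using dvR dv_uminus by metis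
    next
      case True
      have "mpow g n $ i $ i = mpow g n $ 1 $ 1" using sc by (simp add: mat_nth)
      then have "of_nat n * a ^ (n - 1) * X $ i $ j = R 1 1 - R i i"
        using expand[of i i] expand[of 1 1] True X11 by (simp add: algebra_simps)
      then show ?thesis using dvR dv_diff by metis
    qed
    have Bij: "B i j \<in> O2" "X $ i $ j = theta ^ M * B i j" using B by auto
    show ?thesis
    proof (cases "n = 7")
      case False
      then have n7: "\<not> 7 dvd n" using h7 by simp
      have eq: "of_nat n * a ^ (n - 1) * X $ i $ j = theta ^ M * (of_nat n * (a ^ (n - 1) * B i j))"
        using Bij by (simp add: algebra_simps)
      have ZZ: "dv (M + 1) (of_nat n * a ^ (n - 1) * X $ i $ j)" using Z False unfolding K_def by simp
      then have "dv (M + 1) (theta ^ M * (of_nat n * (a ^ (n - 1) * B i j)))" unfolding eq .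
      then have "dv 1 (of_nat n * (a ^ (n - 1) * B i j))" by (rule dv_cancel)
      moreover have "a ^ (n - 1) * B i j \<in> O2" using Bij aO by (auto intro: O2_mult O2_power)
      ultimately have "dv 1 (a ^ (n - 1) * B i j)" using n7 dv_coprime by blast
      then have "dv 1 (B i j)" using dv_unit[OF aO e(1) ae Bij(1)] by blast
      then show ?thesis using dv_Suc Bij by blast
    next
      case True
      have t: "theta * theta = -7" using theta_sq by (simp add: power2_eq_square)
      have "of_nat n * a ^ (n - 1) * X $ i $ j = theta ^ M * (7 * (a ^ 6 * B i j))"
        using Bij True by (simp add: algebra_simps)
      also have "\<dots> = theta ^ M * (- (theta * theta)) * (a ^ 6 * B i j)"
        unfolding t by simp
      also have "\<dots> = theta ^ (M + 2) * (- (a ^ 6 * B i j))"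
        by (simp add: power_add power2_eq_square algebra_simps)
      finally have eq: "of_nat n * a ^ (n - 1) * X $ i $ j = theta ^ (M + 2) * (- (a ^ 6 * B i j))" .
      have ZZ: "dv (M + 3) (of_nat n * a ^ (n - 1) * X $ i $ j)" using Z True unfolding K_def by simp
      have m3: "M + 3 = M + 2 + 1" by simp
      have "dv (M + 2 + 1) (theta ^ (M + 2) * (- (a ^ 6 * B i j)))" using ZZ unfolding eq m3 .
      then have "dv 1 (- (a ^ 6 * B i j))" by (rule dv_cancel)
      then have "dv 1 (a ^ 6 * B i j)" using dv_uminus by fastforce
      then have "dv 1 (B i j)" using dv_unit[OF aO e(1) ae Bij(1)] by blast
      then show ?thesis using dv_Suc Bij by blast
    qed
  qed
  then have "mdv (Suc M) X" unfolding mdv_def by blast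
  then show False using notM by simp
qed

lemma Pg_mpow:
  assumes "Pg g"
  shows "Pg (mpow g n)"
proof -
  obtain e where e: "e \<in> {1, -1}" "\<And>i j. dv 1 (g $ i $ j - mat e $ i $ j)" using assms unfolding Pg_def by blast
  have gO: "mdv 0 g" using assms unfolding Pg_def mdv_def dv0 by blast
  have O: "\<forall>i j. mpow g n $ i $ j \<in> O2" using mdv_mpow[OF gO, of n] unfolding mdv_def by (simp add: dv0)
  define X where "X = g - mat e"
  have gX: "g = mat e + X" by (simp add: X_def)
  have X1: "mdv 1 X" unfolding mdv_def X_def using e(2) by simp
  have en: "e ^ n \<in> {1, -1}" using e(1) by (auto simp: neg_one_even_power neg_one_odd_power split: if_splits) (metis neg_one_even_power neg_one_odd_power)
  have eO: "e ^ k \<in> O2" for k using e(1) O2_1 O2_uminus O2_power by auto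
  have "dv 1 (mpow g n $ i $ j - mat (e ^ n) $ i $ j)" for i j
  proof (cases n)
    case 0 then show ?thesis by (simp add: mpow_0 dv_zero)
  next
    case (Suc m)
    have "mpow g n $ i $ j = (\<Sum>k\<le>Suc m. of_nat (Suc m choose k) * e ^ (Suc m - k) * (mpow X k $ i $ j))"
      unfolding gX Suc by (rule mpow_binom)
    also have "\<dots> = e ^ n * mat 1 $ i $ j + (\<Sum>k\<le>m. of_nat (Suc m choose Suc k) * e ^ (m - k) * (mpow X (Suc k) $ i $ j))"
      by (subst sum.atMost_Suc_shift) (simp add: mpow_0 Suc)
    finally have eq: "mpow g n $ i $ j - mat (e ^ n) $ i $ j = (\<Sum>k\<le>m. of_nat (Suc m choose Suc k) * e ^ (m - k) * (mpow X (Suc k) $ i $ j))"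
      by (simp add: mat_nth)
    have "dv 1 (of_nat (Suc m choose Suc k) * e ^ (m - k) * (mpow X (Suc k) $ i $ j))" for k
    proof -
      have "dv (Suc k * 1) (mpow X (Suc k) $ i $ j)" using mdv_mpow[OF X1, of "Suc k"] unfolding mdv_def by blast
      then have "dv 1 (mpow X (Suc k) $ i $ j)" using dv_mono by fastforce
      then have "dv 1 (of_nat (Suc m choose Suc k) * (e ^ (m - k) * (mpow X (Suc k) $ i $ j)))"
        by (intro dv_cmult O2_of_nat eO)
      then show ?thesis by (simp only: mult.assoc)
    qed
    then show ?thesis unfolding eq by (intro dv_sum) 
  qed
  then show ?thesis unfolding Pg_def using O en by blast
qed

lemma Phi_Pg: "g \<in> Phi_L \<Longrightarrow> Pg g"
  unfolding Phi_L_def Gamma_L_def Pg_def cong_theta_def dv_def by auto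

lemma main:
  "\<forall>g. Pg g \<longrightarrow> n > 0 \<longrightarrow> is_scalar (mpow g n) \<longrightarrow> is_scalar g"
proof (induction n rule: less_induct)
  case (less n)
  show ?case
  proof (intro allI impI)
    fix g assume P: "Pg g" and n: "n > 0" and sc: "is_scalar (mpow g n)"
    show "is_scalar g"
    proof (cases "7 dvd n")
      case False
      obtain c where "mpow g n = mat c" using sc unfolding is_scalar_def by blast
      then show ?thesis using core[OF P n] False by blast
    next
      case True
      then obtain m where m: "n = 7 * m" by blast
      then have m0: "m > 0" "m < n" using n by auto
      have "mpow (mpow g 7) m = mpow g n" using m by (simp add: mpow_mult)
      then have "is_scalar (mpow g 7)" using less.IH[OF m0(2)] Pg_mpow[OF P] m0(1) sc by metis
      then obtain c where "mpow g 7 = mat c" unfolding is_scalar_def by blast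
      then show ?thesis using core[OF P, of 7] by simp
    qed
  qed
qed

theorem lemma2p1:
  fixes g :: "complex^3^3" and n :: nat
  assumes "g \<in> Phi_L" and "n > 0" and "is_scalar (mpow g n)"
  shows "is_scalar g"
  using main Phi_Pg assms by blast

end
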